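(* Let $H$ be a simple, strongly connected digraph with at least one arc, let $k$ be a positive integer, and let $c\ge 0$. Let $T$ be a tournament with $\mathrm{ctw}(T)\le c$ that does not contain $k$ pairwise vertex-disjoint immersion copies of $H$. Then there is a set $F$ of at most $2(k-1)c$ arcs of $T$ such that $T-F$ does not contain $H$ as an immersion.
   Context: A tournament is a simple digraph with exactly one arc between every pair of distinct vertices. An immersion copy of $H$ in a digraph $G$ is a subgraph $\widehat H$ of $G$ with a map sending vertices of $H$ to distinct vertices of $\widehat H$ and each arc $(u,v)$ of $H$ to a directed path from the image of $u$ to the image of $v$, such that each arc of $\widehat H$ lies on exactly one of these paths; $G$ contains $H$ as an immersion if it has such a subgraph. For an ordering $\sigma$ (bijection $V(T)\to[|V(T)|]$) and $\alpha\in\{0,\dots,|V(T)|\}$, the $\alpha$-cut is the set of arcs $(u,v)$ with $\sigma(u)>\alpha\ge\sigma(v)$; the width of $\sigma$ is the maximum size of its cuts, and the cutwidth $\mathrm{ctw}(T)$ is the minimum width of an ordering. *)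

theory Defs
  imports Main
begin

text \<open>A digraph is a pair (V, A) of a vertex set and an arc set A \<subseteq> V \<times> V.
 Simple: finite, no loops (arcs form a set, so no parallel arcs).\<close>

definition simple_digraph :: "'a set \<Rightarrow> ('a \<times> 'a) set \<Rightarrow> bool" where
  "simple_digraph V A \<longleftrightarrow> finite V \<and> A \<subseteq> V \<times> V \<and> (\<forall>v. (v, v) \<notin> A)"

definition strongly_connected :: "'a set \<Rightarrow> ('a \<times> 'a) set \<Rightarrow> bool" where
  "strongly_connected V A \<longleftrightarrow> (\<forall>u\<in>V. \<forall>v\<in>V. (u, v) \<in> A\<^sup>*)"

definition tournament :: "'a set \<Rightarrow> ('a \<times> 'a) set \<Rightarrow> bool" where
  "tournament V A \<longleftrightarrow> simple_digraph V A \<and>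
     (\<forall>u\<in>V. \<forall>v\<in>V. u \<noteq> v \<longrightarrow> ((u, v) \<in> A \<longleftrightarrow> (v, u) \<notin> A))"

definition dipath :: "('a \<times> 'a) set \<Rightarrow> 'a list \<Rightarrow> 'a \<Rightarrow> 'a \<Rightarrow> bool" where
  "dipath B xs u v \<longleftrightarrow> xs \<noteq> [] \<and> distinct xs \<and> hd xs = u \<and> last xs = v \<and>
     (\<forall>i. Suc i < length xs \<longrightarrow> (xs ! i, xs ! Suc i) \<in> B)"

definition path_arcs :: "'a list \<Rightarrow> ('a \<times> 'a) set" where
  "path_arcs xs = set (zip xs (tl xs))"

definition immersion_copy ::
  "'b set \<Rightarrow> ('b \<times> 'b) set \<Rightarrow> 'a set \<Rightarrow> ('a \<times> 'a) set \<Rightarrow> 'a set \<Rightarrow> ('a \<times> 'a) set \<Rightarrow> bool" where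
  "immersion_copy VH AH V A W B \<longleftrightarrow>
     W \<subseteq> V \<and> B \<subseteq> A \<and> B \<subseteq> W \<times> W \<and>
     (\<exists>(\<phi> :: 'b \<Rightarrow> 'a) (P :: 'b \<times> 'b \<Rightarrow> 'a list).
        inj_on \<phi> VH \<and> \<phi> ` VH \<subseteq> W \<and>
        (\<forall>(x, y)\<in>AH. dipath B (P (x, y)) (\<phi> x) (\<phi> y)) \<and>
        (\<forall>b\<in>B. \<exists>!e. e \<in> AH \<and> b \<in> path_arcs (P e)))"

definition contains_immersion ::
  "'b set \<Rightarrow> ('b \<times> 'b) set \<Rightarrow> 'a set \<Rightarrow> ('a \<times> 'a) set \<Rightarrow> bool" where
  "contains_immersion VH AH V A \<longleftrightarrow> (\<exists>W B. immersion_copy VH AH V A W B)"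

definition contains_disjoint_immersions ::
  "nat \<Rightarrow> 'b set \<Rightarrow> ('b \<times> 'b) set \<Rightarrow> 'a set \<Rightarrow> ('a \<times> 'a) set \<Rightarrow> bool" where
  "contains_disjoint_immersions k VH AH V A \<longleftrightarrow>
     (\<exists>(Ws :: nat \<Rightarrow> 'a set) Bs. (\<forall>i<k. immersion_copy VH AH V A (Ws i) (Bs i)) \<and>
        (\<forall>i<k. \<forall>j<k. i \<noteq> j \<longrightarrow> Ws i \<inter> Ws j = {}))"

definition cut :: "('a \<times> 'a) set \<Rightarrow> ('a \<Rightarrow> nat) \<Rightarrow> nat \<Rightarrow> ('a \<times> 'a) set" where
  "cut A \<sigma> \<alpha> = {(u, v) \<in> A. \<sigma> u > \<alpha> \<and> \<alpha> \<ge> \<sigma> v}"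

definition ordering_width :: "'a set \<Rightarrow> ('a \<times> 'a) set \<Rightarrow> ('a \<Rightarrow> nat) \<Rightarrow> nat" where
  "ordering_width V A \<sigma> = Max ((\<lambda>\<alpha>. card (cut A \<sigma> \<alpha>)) ` {0..card V})"

definition cutwidth :: "'a set \<Rightarrow> ('a \<times> 'a) set \<Rightarrow> nat" where
  "cutwidth V A = Min {ordering_width V A \<sigma> | \<sigma>. bij_betw \<sigma> V {1..card V}}"

end

theory Submission
  imports Defs
begin

lemma path_reach:
  assumes "\<forall>i. Suc i < length xs \<longrightarrow> (xs!i, xs!Suc i) \<in> B" "i \<le> j"
  shows "j < length xs \<longrightarrow> (xs!i, xs!j) \<in> B\<^sup>*"
  using assms(2)
proof (induction j rule: dec_induct)
  case base then show ?case by simp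
next
  case (step n)
  show ?case
  proof
    assume "Suc n < length xs"
    then have "(xs!i, xs!n) \<in> B\<^sup>*" "(xs!n, xs!Suc n) \<in> B" using step assms(1) by auto
    then show "(xs!i, xs!Suc n) \<in> B\<^sup>*" by (rule rtrancl_into_rtrancl)
  qed
qed

lemma path_arcs_nth:
  assumes "b \<in> path_arcs xs"
  shows "\<exists>i. Suc i < length xs \<and> b = (xs!i, xs!Suc i)"
proof -
  from assms obtain n where "xs!n = fst b" "tl xs ! n = snd b" "n < length xs" "n < length (tl xs)"
    unfolding path_arcs_def in_set_zip by blast
  then show ?thesis by (intro exI[of _ n]) (auto simp: nth_tl)
qed

lemma closed_side:
  assumes "B \<subseteq> A" "B \<inter> cut A \<sigma> \<alpha> = {}" "(y,x) \<in> B\<^sup>*" "\<alpha> < \<sigma> y"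
  shows "\<alpha> < \<sigma> x"
  using assms(3,4)
proof (induction rule: rtrancl_induct)
  case base then show ?case .
next
  case (step u v)
  show ?case
  proof (rule ccontr)
    assume "\<not> \<alpha> < \<sigma> v"
    then have "(u,v) \<in> cut A \<sigma> \<alpha>" using step assms(1) by (auto simp: cut_def)
    then show False using step assms(2) by blast
  qed
qed

lemma out_arc:
  assumes "simple_digraph VH AH" "strongly_connected VH AH" "AH \<noteq> {}" "u \<in> VH"
  shows "\<exists>v. (u,v) \<in> AH"
proof -
  obtain a b where ab: "(a,b) \<in> AH" using assms(3) by auto
  then have "a \<in> VH" "b \<in> VH" "a \<noteq> b" using assms(1) unfolding simple_digraph_def by auto
  then obtain v where v: "v \<in> VH" "v \<noteq> u" by auto
  then have "(u,v) \<in> AH\<^sup>*" using assms(2,4) unfolding strongly_connected_def by auto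
  then show ?thesis using v(2) by (cases rule: converse_rtranclE) auto
qed

lemma copy_facts:
  assumes H: "simple_digraph VH AH" "strongly_connected VH AH" "AH \<noteq> {}"
    and ic: "immersion_copy VH AH V A W B"
  shows "immersion_copy VH AH V A (Field B) B" "B \<noteq> {}"
    "\<forall>x\<in>Field B. \<forall>y\<in>Field B. (x,y)\<in>B\<^sup>*" "Field B \<subseteq> W"
proof -
  from ic obtain \<phi> P where WV: "W \<subseteq> V" and BA: "B \<subseteq> A" and BW: "B \<subseteq> W \<times> W"
    and inj: "inj_on \<phi> VH" and phiW: "\<phi> ` VH \<subseteq> W"
    and paths: "\<forall>(x, y)\<in>AH. dipath B (P (x, y)) (\<phi> x) (\<phi> y)"
    and uniq: "\<forall>b\<in>B. \<exists>!e. e \<in> AH \<and> b \<in> path_arcs (P e)"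
    unfolding immersion_copy_def by blast
  have AHV: "AH \<subseteq> VH \<times> VH" and noloop: "\<And>v. (v,v) \<notin> AH" using H(1) unfolding simple_digraph_def by auto
  have ends: "(\<phi> x, P (x,y) ! i) \<in> B\<^sup>* \<and> (P (x,y) ! i, \<phi> y) \<in> B\<^sup>*"
    if "(x,y) \<in> AH" "i < length (P (x,y))" for x y i
  proof -
    let ?xs = "P (x,y)"
    have d: "dipath B ?xs (\<phi> x) (\<phi> y)" using paths that(1) by auto
    then have ne: "?xs \<noteq> []" and h: "hd ?xs = \<phi> x" and l: "last ?xs = \<phi> y"
      and st: "\<forall>i. Suc i < length ?xs \<longrightarrow> (?xs!i, ?xs!Suc i) \<in> B"
      unfolding dipath_def by auto
    have "hd ?xs = ?xs ! 0" using ne by (simp add: hd_conv_nth)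
    moreover have "last ?xs = ?xs ! (length ?xs - 1)" using ne by (simp add: last_conv_nth)
    moreover have "(?xs!0, ?xs!i) \<in> B\<^sup>*" using path_reach[OF st, of 0 i] that(2) by simp
    moreover have "(?xs!i, ?xs!(length ?xs - 1)) \<in> B\<^sup>*" using path_reach[OF st, of i "length ?xs - 1"] that(2) by simp
    ultimately show ?thesis using h l by simp
  qed
  have pathB: "(\<phi> x, \<phi> y) \<in> B\<^sup>*" if "(x,y) \<in> AH" for x y
  proof -
    have ne: "P (x,y) \<noteq> []" using paths that unfolding dipath_def by auto
    have "(\<phi> x, P (x,y) ! 0) \<in> B\<^sup>*" using ends[OF that, of 0] ne by simp
    moreover have "P (x,y) ! 0 = \<phi> x" using paths that ne unfolding dipath_def by (auto simp: hd_conv_nth)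
    ultimately show ?thesis using ends[OF that, of 0] ne by simp
  qed
  have lift: "(\<phi> p, \<phi> q) \<in> B\<^sup>*" if "(p,q) \<in> AH\<^sup>*" for p q
    using that
  proof (induction rule: rtrancl_induct)
    case base then show ?case by simp
  next
    case (step y z) then show ?case using pathB[OF step(2)] by (meson rtrancl_trans)
  qed
  have phiF: "\<phi> x \<in> Field B" if xV: "x \<in> VH" for x
  proof -
    obtain y where xy: "(x,y) \<in> AH" using out_arc[OF H(1) H(2) H(3) xV] by auto
    then have "y \<in> VH" "x \<noteq> y" using AHV noloop by auto
    then have neq: "\<phi> x \<noteq> \<phi> y" using inj xV unfolding inj_on_def by auto
    let ?xs = "P (x,y)"
    have d: "dipath B ?xs (\<phi> x) (\<phi> y)" using paths xy by auto
    then have ne: "?xs \<noteq> []" and h: "hd ?xs = \<phi> x" and l: "last ?xs = \<phi> y"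
      and st: "\<forall>i. Suc i < length ?xs \<longrightarrow> (?xs!i, ?xs!Suc i) \<in> B"
      unfolding dipath_def by auto
    have "length ?xs \<ge> 2"
    proof (rule ccontr)
      assume "\<not> 2 \<le> length ?xs"
      then have "length ?xs = 1" using ne by (cases ?xs) (auto simp: Suc_le_eq)
      then obtain z where "?xs = [z]" by (cases ?xs) auto
      then show False using h l neq by simp
    qed
    then have "(?xs!0, ?xs!1) \<in> B" using st by auto
    moreover have "?xs ! 0 = \<phi> x" using h ne by (simp add: hd_conv_nth)
    ultimately show ?thesis by (metis FieldI1)
  qed
  show FW: "Field B \<subseteq> W" using BW unfolding Field_def by auto
  show "immersion_copy VH AH V A (Field B) B"
    unfolding immersion_copy_def
  proof (intro conjI)
    show "Field B \<subseteq> V" using FW WV by auto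
    show "B \<subseteq> A" by (rule BA)
    show "B \<subseteq> Field B \<times> Field B" by (auto intro: FieldI1 FieldI2)
    show "\<exists>\<phi> P. inj_on \<phi> VH \<and> \<phi> ` VH \<subseteq> Field B \<and>
        (\<forall>(x, y)\<in>AH. dipath B (P (x, y)) (\<phi> x) (\<phi> y)) \<and>
        (\<forall>b\<in>B. \<exists>!e. e \<in> AH \<and> b \<in> path_arcs (P e))"
      using inj phiF paths uniq by blast
  qed
  show "B \<noteq> {}"
  proof -
    obtain a b where "(a,b) \<in> AH" using H(3) by auto
    then have "a \<in> VH" using AHV by auto
    then have "\<phi> a \<in> Field B" by (rule phiF)
    then show ?thesis unfolding Field_def by auto
  qed
  have onpath: "\<exists>p q. (p,q) \<in> AH \<and> (\<phi> p, z) \<in> B\<^sup>* \<and> (z, \<phi> q) \<in> B\<^sup>*" if zF: "z \<in> Field B" for z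
  proof -
    obtain b where b: "b \<in> B" "z = fst b \<or> z = snd b" using zF unfolding Field_def by force
    then obtain e where e: "e \<in> AH" "b \<in> path_arcs (P e)" using uniq by blast
    obtain p q where pq: "e = (p,q)" by (cases e)
    obtain i where i: "Suc i < length (P e)" "b = (P e ! i, P e ! Suc i)" using path_arcs_nth[OF e(2)] by blast
    have "z = P (p,q) ! i \<and> i < length (P (p,q)) \<or> z = P (p,q) ! Suc i \<and> Suc i < length (P (p,q))"
      using b(2) i pq by auto
    then show ?thesis using ends e(1) pq by metis
  qed
  show "\<forall>x\<in>Field B. \<forall>y\<in>Field B. (x,y)\<in>B\<^sup>*"
  proof (intro ballI)
    fix x y assume "x \<in> Field B" "y \<in> Field B"
    obtain p1 q1 where 1: "(p1,q1) \<in> AH" "(x, \<phi> q1) \<in> B\<^sup>*" using onpath[OF \<open>x \<in> Field B\<close>] by blast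
    obtain p2 q2 where 2: "(p2,q2) \<in> AH" "(\<phi> p2, y) \<in> B\<^sup>*" using onpath[OF \<open>y \<in> Field B\<close>] by blast
    have "q1 \<in> VH" "p2 \<in> VH" using 1 2 AHV by auto
    then have "(q1,p2) \<in> AH\<^sup>*" using H(2) unfolding strongly_connected_def by auto
    then have "(\<phi> q1, \<phi> p2) \<in> B\<^sup>*" by (rule lift)
    then show "(x,y) \<in> B\<^sup>*" using 1 2 by (meson rtrancl_trans)
  qed
qed


definition seg :: "('a \<Rightarrow> nat) \<Rightarrow> 'a set \<Rightarrow> nat \<Rightarrow> nat \<Rightarrow> 'a set" where
  "seg \<sigma> V l r = {v\<in>V. l < \<sigma> v \<and> \<sigma> v \<le> r}"

lemma copy_mono: "immersion_copy VH AH V A' W B \<Longrightarrow> A' \<subseteq> A \<Longrightarrow> immersion_copy VH AH V A W B"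
  unfolding immersion_copy_def by blast

lemma greedy:
  assumes H: "simple_digraph VH AH" "strongly_connected VH AH" "AH \<noteq> {}"
    and AV: "A \<subseteq> V \<times> V" and noloop: "\<And>v. (v,v) \<notin> A"
    and inj: "inj_on \<sigma> V" and cw: "\<And>\<alpha>. \<alpha> \<le> N \<Longrightarrow> card (cut A \<sigma> \<alpha>) \<le> c"
  shows "\<not> (\<exists>Ws Bs. (\<forall>i<Suc m. immersion_copy VH AH V A (Ws i) (Bs i) \<and> Ws i \<subseteq> seg \<sigma> V l N) \<and>
              (\<forall>i<Suc m. \<forall>i'<Suc m. i \<noteq> i' \<longrightarrow> Ws i \<inter> Ws i' = {})) \<Longrightarrow>
    \<exists>F \<subseteq> A. card F \<le> 2 * m * c \<and>
      \<not> (\<exists>W B. immersion_copy VH AH V (A - F) W B \<and> Field B \<subseteq> seg \<sigma> V l N)"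
proof (induction m arbitrary: l)
  case 0
  show ?case
  proof (intro exI[of _ "{}"] conjI notI)
    assume "\<exists>W B. immersion_copy VH AH V (A - {}) W B \<and> Field B \<subseteq> seg \<sigma> V l N"
    then obtain W B where "immersion_copy VH AH V A W B" "Field B \<subseteq> seg \<sigma> V l N" by auto
    then have fb: "immersion_copy VH AH V A (Field B) B" "Field B \<subseteq> seg \<sigma> V l N" using copy_facts[OF H] by auto
    define Ws0 where "Ws0 = (\<lambda>_::nat. Field B)"
    define Bs0 where "Bs0 = (\<lambda>_::nat. B)"
    have w: "(\<forall>i<Suc 0. immersion_copy VH AH V A (Ws0 i) (Bs0 i) \<and> Ws0 i \<subseteq> seg \<sigma> V l N) \<and>
      (\<forall>i<Suc 0. \<forall>i'<Suc 0. i \<noteq> i' \<longrightarrow> Ws0 i \<inter> Ws0 i' = {})" using fb by (simp add: Ws0_def Bs0_def)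
    show False by (rule notE[OF "0.prems"], rule exI[of _ Ws0], rule exI[of _ Bs0], rule w)
  qed auto
next
  case (Suc m)
  let ?P = "\<lambda>r. \<exists>W B. immersion_copy VH AH V A W B \<and> W \<subseteq> seg \<sigma> V l r"
  show ?case
  proof (cases "?P N")
    case False
    show ?thesis
    proof (intro exI[of _ "{}"] conjI notI)
      assume "\<exists>W B. immersion_copy VH AH V (A - {}) W B \<and> Field B \<subseteq> seg \<sigma> V l N"
      then obtain W B where "immersion_copy VH AH V A W B" "Field B \<subseteq> seg \<sigma> V l N" by auto
      then have "immersion_copy VH AH V A (Field B) B" "Field B \<subseteq> seg \<sigma> V l N" using copy_facts[OF H] by auto
      then show False using False by blast
    qed auto
  next
    case True
    define a where "a = (LEAST r. ?P r)"
    have aN: "a \<le> N" unfolding a_def using True by (rule Least_le)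
    have Pa: "?P a" unfolding a_def using True by (rule LeastI)
    then obtain W0 B0 where c0: "immersion_copy VH AH V A W0 B0" "W0 \<subseteq> seg \<sigma> V l a" by blast
    have la: "l < a"
    proof -
      have "B0 \<noteq> {}" "Field B0 \<subseteq> W0" using copy_facts[OF H c0(1)] by auto
      then obtain x where "x \<in> W0" unfolding Field_def by auto
      then show ?thesis using c0(2) by (auto simp: seg_def)
    qed
    have minimal: "\<not> ?P r" if rl: "r < a" for r using not_less_Least[OF rl[unfolded a_def]] .
    have noj: "\<not> (\<exists>Ws Bs. (\<forall>i<Suc m. immersion_copy VH AH V A (Ws i) (Bs i) \<and> Ws i \<subseteq> seg \<sigma> V a N) \<and>
              (\<forall>i<Suc m. \<forall>i'<Suc m. i \<noteq> i' \<longrightarrow> Ws i \<inter> Ws i' = {}))"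
    proof
      assume "\<exists>Ws Bs. (\<forall>i<Suc m. immersion_copy VH AH V A (Ws i) (Bs i) \<and> Ws i \<subseteq> seg \<sigma> V a N) \<and>
              (\<forall>i<Suc m. \<forall>i'<Suc m. i \<noteq> i' \<longrightarrow> Ws i \<inter> Ws i' = {})"
      then obtain Ws Bs where cs: "\<forall>i<Suc m. immersion_copy VH AH V A (Ws i) (Bs i) \<and> Ws i \<subseteq> seg \<sigma> V a N"
        and dj: "\<forall>i<Suc m. \<forall>i'<Suc m. i \<noteq> i' \<longrightarrow> Ws i \<inter> Ws i' = {}" by blast
      define Ws' where "Ws' = (\<lambda>i. if i = Suc m then W0 else Ws i)"
      define Bs' where "Bs' = (\<lambda>i. if i = Suc m then B0 else Bs i)"
      have s1: "seg \<sigma> V a N \<subseteq> seg \<sigma> V l N" "seg \<sigma> V l a \<subseteq> seg \<sigma> V l N"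
        using c0(2) aN la by (auto simp: seg_def)
      have s2: "seg \<sigma> V a N \<inter> seg \<sigma> V l a = {}" by (auto simp: seg_def)
      have "\<forall>i<Suc (Suc m). immersion_copy VH AH V A (Ws' i) (Bs' i) \<and> Ws' i \<subseteq> seg \<sigma> V l N"
      proof (intro allI impI)
        fix i assume i: "i < Suc (Suc m)"
        show "immersion_copy VH AH V A (Ws' i) (Bs' i) \<and> Ws' i \<subseteq> seg \<sigma> V l N"
        proof (cases "i = Suc m")
          case True then show ?thesis using c0 s1 unfolding Ws'_def Bs'_def by simp
        next
          case False
          then have "i < Suc m" using i by simp
          then show ?thesis using cs s1 False unfolding Ws'_def Bs'_def by auto
        qed
      qed
      moreover have "\<forall>i<Suc (Suc m). \<forall>i'<Suc (Suc m). i \<noteq> i' \<longrightarrow> Ws' i \<inter> Ws' i' = {}"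
      proof (intro allI impI)
        fix i i' assume ii: "i < Suc (Suc m)" "i' < Suc (Suc m)" "i \<noteq> i'"
        have sub: "Ws' j \<subseteq> seg \<sigma> V a N" if "j < Suc m" for j
          using cs that unfolding Ws'_def by auto
        show "Ws' i \<inter> Ws' i' = {}"
        proof (cases "i = Suc m")
          case True
          then have "i' < Suc m" using ii by auto
          have "Ws' i = W0" using True unfolding Ws'_def by simp
          moreover have "Ws' i' \<subseteq> seg \<sigma> V a N" using sub[OF \<open>i' < Suc m\<close>] .
          ultimately show ?thesis using c0(2) s2 by blast
        next
          case False
          then have i1: "i < Suc m" using ii by auto
          show ?thesis
          proof (cases "i' = Suc m")
            case True
            have "Ws' i' = W0" using True unfolding Ws'_def by simp
            moreover have "Ws' i \<subseteq> seg \<sigma> V a N" using sub[OF i1] .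
            ultimately show ?thesis using c0(2) s2 by blast
          next
            case False
            then have "i' < Suc m" using ii by auto
            then show ?thesis using dj i1 ii(3) False \<open>i \<noteq> Suc m\<close> unfolding Ws'_def by auto
          qed
        qed
      qed
      ultimately show False using Suc.prems by blast
    qed
    obtain F' where F': "F' \<subseteq> A" "card F' \<le> 2 * m * c"
      "\<not> (\<exists>W B. immersion_copy VH AH V (A - F') W B \<and> Field B \<subseteq> seg \<sigma> V a N)"
      using Suc.IH[OF noj] by blast
    define F where "F = F' \<union> cut A \<sigma> a \<union> cut A \<sigma> (a - 1)"
    have FA: "F \<subseteq> A" using F'(1) unfolding F_def cut_def by auto
    have "card F \<le> card F' + card (cut A \<sigma> a) + card (cut A \<sigma> (a - 1))"
      unfolding F_def by (rule order_trans[OF card_Un_le add_right_mono[OF card_Un_le]])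
    also have "\<dots> \<le> 2 * m * c + c + c" using F'(2) cw[OF aN] cw[of "a - 1"] aN by (meson add_mono diff_le_self order_trans)
    finally have cardF: "card F \<le> 2 * Suc m * c" by (simp add: algebra_simps)
    have nocopy: "\<not> (\<exists>W B. immersion_copy VH AH V (A - F) W B \<and> Field B \<subseteq> seg \<sigma> V l N)"
    proof
      assume "\<exists>W B. immersion_copy VH AH V (A - F) W B \<and> Field B \<subseteq> seg \<sigma> V l N"
      then obtain W B where ic: "immersion_copy VH AH V (A - F) W B" and FB: "Field B \<subseteq> seg \<sigma> V l N" by blast
      have ic': "immersion_copy VH AH V (A - F) (Field B) B" and Bne: "B \<noteq> {}"
        and sc: "\<forall>x\<in>Field B. \<forall>y\<in>Field B. (x,y)\<in>B\<^sup>*" using copy_facts[OF H ic] by auto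
      have BAF: "B \<subseteq> A - F" using ic unfolding immersion_copy_def by blast
      have side: "\<alpha> < \<sigma> x" if "x \<in> Field B" "y \<in> Field B" "\<alpha> < \<sigma> y" "\<alpha> = a \<or> \<alpha> = a - 1" for x y \<alpha>
      proof (rule closed_side[of B A \<sigma> \<alpha> y x])
        show "B \<subseteq> A" using BAF by auto
        show "B \<inter> cut A \<sigma> \<alpha> = {}" using BAF that(4) unfolding F_def by auto
        show "(y, x) \<in> B\<^sup>*" using sc that(1,2) by auto
      qed (use that in auto)
      show False
      proof (cases "\<exists>y\<in>Field B. a < \<sigma> y")
        case True
        then obtain y where y: "y \<in> Field B" "a < \<sigma> y" by blast
        have "Field B \<subseteq> seg \<sigma> V a N"
        proof
          fix x assume x: "x \<in> Field B"
          have "a < \<sigma> x" using side[OF x y(1) y(2)] by simp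
          then show "x \<in> seg \<sigma> V a N" using FB x by (auto simp: seg_def)
        qed
        moreover have "immersion_copy VH AH V (A - F') W B" using ic by (rule copy_mono) (auto simp: F_def)
        ultimately show False using F'(3) by blast
      next
        case False1: False
        show False
        proof (cases "\<exists>y\<in>Field B. a - 1 < \<sigma> y")
          case True
          then obtain y where y: "y \<in> Field B" "a - 1 < \<sigma> y" by blast
          have all: "\<forall>x\<in>Field B. \<sigma> x = a"
          proof
            fix x assume x: "x \<in> Field B"
            have "a - 1 < \<sigma> x" using side[OF x y(1) y(2)] by simp
            moreover have "\<sigma> x \<le> a" using False1 x by auto
            ultimately show "\<sigma> x = a" by linarith
          qed
          obtain u v where uv: "(u,v) \<in> B" using Bne by auto
          then have "u \<noteq> v" "u \<in> V" "v \<in> V" using BAF noloop AV by auto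
          moreover have "\<sigma> u = \<sigma> v" using all FieldI1[OF uv] FieldI2[OF uv] by simp
          ultimately show False using inj unfolding inj_on_def by blast
        next
          case False
          have "Field B \<subseteq> seg \<sigma> V l (a - 1)" using False FB by (auto simp: seg_def)
          moreover have "immersion_copy VH AH V A (Field B) B" using ic' by (rule copy_mono) auto
          ultimately have Pa1: "?P (a - 1)" by blast
          show False
          proof (cases "a = 0")
            case True
            have "seg \<sigma> V l (a - 1) = {}" using True by (auto simp: seg_def)
            then show False using \<open>Field B \<subseteq> seg \<sigma> V l (a - 1)\<close> Bne unfolding Field_def by auto
          next
            case False
            then have "a - 1 < a" by simp
            then show False using minimal Pa1 by blast
          qed
        qed
      qed
    qed
    show ?thesis using FA cardF nocopy by blast
  qed
qed


theorem lemma17: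
  fixes VH :: "'b set" and AH :: "('b \<times> 'b) set"
    and V :: "'a set" and A :: "('a \<times> 'a) set"
    and k c :: nat
  assumes "simple_digraph VH AH" and "strongly_connected VH AH" and "AH \<noteq> {}"
    and "k \<ge> 1"
    and "tournament V A" and "cutwidth V A \<le> c"
    and "\<not> contains_disjoint_immersions k VH AH V A"
  shows "\<exists>F. F \<subseteq> A \<and> card F \<le> 2 * (k - 1) * c \<and> \<not> contains_immersion VH AH V (A - F)"
proof -
  note H = assms(1,2,3)
  have finV: "finite V" and AV: "A \<subseteq> V \<times> V" and noloop: "\<And>v. (v,v) \<notin> A"
    using assms(5) unfolding tournament_def simple_digraph_def by auto
  have finA: "finite A" using finV AV finite_subset by blast
  define N where "N = card V"
  define S where "S = {ordering_width V A \<sigma> | \<sigma>. bij_betw \<sigma> V {1..card V}}"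
  have "\<exists>h. bij_betw h V {1..card V}" using finV by (intro finite_same_card_bij) auto
  then have Sne: "S \<noteq> {}" unfolding S_def by auto
  have owle: "ordering_width V A \<sigma> \<le> card A" for \<sigma>
    unfolding ordering_width_def
  proof (rule Max.boundedI)
    show "finite ((\<lambda>\<alpha>. card (cut A \<sigma> \<alpha>)) ` {0..card V})" by simp
    show "(\<lambda>\<alpha>. card (cut A \<sigma> \<alpha>)) ` {0..card V} \<noteq> {}" by simp
    show "\<And>x. x \<in> (\<lambda>\<alpha>. card (cut A \<sigma> \<alpha>)) ` {0..card V} \<Longrightarrow> x \<le> card A"
      using finA by (auto intro!: card_mono simp: cut_def)
  qed
  have Sfin: "finite S" by (rule finite_subset[of _ "{..card A}"]) (use owle in \<open>auto simp: S_def\<close>)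
  have "cutwidth V A \<in> S" unfolding cutwidth_def S_def[symmetric] using Sfin Sne by (rule Min_in)
  then obtain \<sigma> where bij: "bij_betw \<sigma> V {1..card V}" and ow: "ordering_width V A \<sigma> = cutwidth V A"
    unfolding S_def by auto
  have cw: "card (cut A \<sigma> \<alpha>) \<le> c" if "\<alpha> \<le> N" for \<alpha>
  proof -
    have "card (cut A \<sigma> \<alpha>) \<le> ordering_width V A \<sigma>"
      unfolding ordering_width_def using that N_def by (intro Max_ge) auto
    then show ?thesis using ow assms(6) by simp
  qed
  have inj: "inj_on \<sigma> V" using bij by (rule bij_betw_imp_inj_on)
  have range: "\<sigma> v \<in> {1..N}" if "v \<in> V" for v using bij_betw_apply[OF bij that] N_def by simp
  have k: "Suc (k - 1) = k" using assms(4) by simp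
  have nod: "\<not> (\<exists>Ws Bs. (\<forall>i<Suc (k - 1). immersion_copy VH AH V A (Ws i) (Bs i) \<and> Ws i \<subseteq> seg \<sigma> V 0 N) \<and>
              (\<forall>i<Suc (k - 1). \<forall>i'<Suc (k - 1). i \<noteq> i' \<longrightarrow> Ws i \<inter> Ws i' = {}))"
    using assms(7) unfolding k contains_disjoint_immersions_def by blast
  obtain F where F: "F \<subseteq> A" "card F \<le> 2 * (k - 1) * c"
    "\<not> (\<exists>W B. immersion_copy VH AH V (A - F) W B \<and> Field B \<subseteq> seg \<sigma> V 0 N)"
    using greedy[OF H AV noloop inj cw nod] by blast
  have "\<not> contains_immersion VH AH V (A - F)"
  proof
    assume "contains_immersion VH AH V (A - F)"
    then obtain W B where ic: "immersion_copy VH AH V (A - F) W B" unfolding contains_immersion_def by blast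
    have "Field B \<subseteq> W" "W \<subseteq> V" using copy_facts[OF H ic] ic unfolding immersion_copy_def by auto
    then have "Field B \<subseteq> seg \<sigma> V 0 N" using range by (fastforce simp: seg_def)
    then show False using F(3) ic by blast
  qed
  then show ?thesis using F(1,2) by blast
qed

end
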